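(* Let $X$ be a BMC with kernel $\mathcal P$ and initial distribution $\nu$ such that Assumptions (F) and (F2) hold with $\alpha\in(0,1/\sqrt2)$, and let $\mathfrak f=(f_\ell,\ell\in\mathbb N)$ be a sequence in $F$ such that there is $g\in F$ with $|\mathcal Q^nf_\ell|\le g$ and $|\mathcal Q^nf_\ell-\langle\mu,f_\ell\rangle|\le\alpha^ng$ for all $n,\ell$. Let $(p_n)$ be a sequence as described in the context and $$R_0(n)=|\mathbb G_n|^{-1/2}\sum_{k=0}^{n-p_n-1}M_{\mathbb G_k}(\tilde f_{n-k}).$$ Then $\lim_{n\to\infty}\mathbb E[R_0(n)^2]=0$.
   Context: Let $(S,\mathscr S)$ be a measurable space. Let $\mathbb G_0=\{\emptyset\}$, $\mathbb G_k=\{0,1\}^k$ (words of length $k$), $\mathbb T_n=\bigcup_{r=0}^n\mathbb G_r$, $\mathbb T=\bigcup_{r\ge0}\mathbb G_r$; $|\mathbb G_n|=2^n$. Let $\mathcal P$ be a probability kernel from $S$ to $S^2$ and $\nu$ a probability measure on $S$. For $g:S^3\to\mathbb R$, $\mathcal Pg(x)=\int g(x,y,z)\mathcal P(x,dy,dz)$, and for $h:S^2\to\mathbb R$, $\mathcal Ph(x)=\int h(y,z)\mathcal P(x,dy,dz)$. A BMC with initial distribution $\nu$ and kernel $\mathcal P$ is a process $X=(X_i,i\in\mathbb T)$ with $X_\emptyset\sim\nu$ such that for all $k\ge0$ and bounded measurable $g_i:S^3\to\mathbb R$, $\mathbb E[\prod_{i\in\mathbb G_k}g_i(X_i,X_{i0},X_{i1})\mid\sigma(X_j,j\in\mathbb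 T_k)]=\prod_{i\in\mathbb G_k}\mathcal Pg_i(X_i)$. Let $\mathcal Q(x,A)=\frac12(\mathcal P(x,A\times S)+\mathcal P(x,S\times A))$, $\mathcal Qf(x)=\int f(y)\mathcal Q(x,dy)$, $\mathcal Q^n$ its iterates. Notation: $(f\otimes g)(x,y)=f(x)g(y)$, $\langle\mu,f\rangle=\int f\,d\mu$, $\tilde f=f-\langle\mu,f\rangle$, $M_A(f)=\sum_{i\in A}f(X_i)$. Assumption (F): $F$ is a set of real measurable functions on $S$ such that (i) $F$ is a vector space containing the constants; (ii) $f\in F\Rightarrow f^2\in F$; (iii) $F\subset L^1(\nu)$; (iv) for all $f_0,f_1\in F$ and $x\in S$, $f_0\otimes f_1\in L^1(\mathcal P(x,\cdot))$ and $\mathcal P(f_0\otimes f_1)\in F$. Assumption (F2): there exist a probability measure $\mu$ on $S$ (invariant for $\mathcal Q$) with $F\subset L^1(\mu)$ and $\alpha\in(0,1)$ such that for every $f\in F$ there is $g\in F$ with $|\mathcal Q^nf-\langle\mu,f\rangle|\le\alpha^ng$ for all $n$. The sequence $(p_n,n\in\mathbb N)$ is a non-decreasing sequence of positive integers with $p_n<n$, $\lim_n p_n/n=1$, and $\lim_n(n-p_n-\lambda\log n)=+\infty$ for every $\lambda>0$. *)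

theory Defs
  imports "HOL-Probability.Probability"
begin

text \<open>Binary tree index sets: words over {0,1} are bool lists (False = 0, True = 1).\<close>

definition Gen :: "nat \<Rightarrow> bool list set" where
  "Gen k = {i. length i = k}"

definition Tree_upto :: "nat \<Rightarrow> bool list set" where
  "Tree_upto n = {i. length i \<le> n}"

definition Pop3 :: "('a \<Rightarrow> ('a \<times> 'a) measure) \<Rightarrow> ('a \<times> 'a \<times> 'a \<Rightarrow> real) \<Rightarrow> 'a \<Rightarrow> real" where
  "Pop3 P g x = (\<integral>yz. g (x, fst yz, snd yz) \<partial>(P x))"

definition Pop2 :: "('a \<Rightarrow> ('a \<times> 'a) measure) \<Rightarrow> ('a \<times> 'a \<Rightarrow> real) \<Rightarrow> 'a \<Rightarrow> real" where
  "Pop2 P h x = (\<integral>yz. h yz \<partial>(P x))"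

definition Qop :: "('a \<Rightarrow> ('a \<times> 'a) measure) \<Rightarrow> ('a \<Rightarrow> real) \<Rightarrow> 'a \<Rightarrow> real" where
  "Qop P f x = ((\<integral>yz. f (fst yz) \<partial>(P x)) + (\<integral>yz. f (snd yz) \<partial>(P x))) / 2"

definition tree_filtr :: "'w measure \<Rightarrow> 'a measure \<Rightarrow> (bool list \<Rightarrow> 'w \<Rightarrow> 'a) \<Rightarrow> nat \<Rightarrow> 'w measure" where
  "tree_filtr \<Omega> M X k =
     sigma (space \<Omega>) (\<Union>j\<in>Tree_upto k. {X j -` A \<inter> space \<Omega> | A. A \<in> sets M})"

definition is_BMC :: "'a measure \<Rightarrow> 'w measure \<Rightarrow> (bool list \<Rightarrow> 'w \<Rightarrow> 'a)
    \<Rightarrow> 'a measure \<Rightarrow> ('a \<Rightarrow> ('a \<times> 'a) measure) \<Rightarrow> bool" where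
  "is_BMC M \<Omega> X \<nu> P \<longleftrightarrow>
     prob_space \<Omega> \<and> (\<forall>i. X i \<in> \<Omega> \<rightarrow>\<^sub>M M) \<and> distr \<Omega> M (X []) = \<nu> \<and>
     (\<forall>k (g :: bool list \<Rightarrow> 'a \<times> 'a \<times> 'a \<Rightarrow> real).
        (\<forall>i. g i \<in> borel_measurable (M \<Otimes>\<^sub>M M \<Otimes>\<^sub>M M) \<and>
             (\<exists>B. \<forall>x\<in>space (M \<Otimes>\<^sub>M M \<Otimes>\<^sub>M M). \<bar>g i x\<bar> \<le> B)) \<longrightarrow>
        (AE \<omega> in \<Omega>.
           real_cond_exp \<Omega> (tree_filtr \<Omega> M X k)
             (\<lambda>\<omega>. \<Prod>i\<in>Gen k. g i (X i \<omega>, X (i @ [False]) \<omega>, X (i @ [True]) \<omega>)) \<omega>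
           = (\<Prod>i\<in>Gen k. Pop3 P (g i) (X i \<omega>))))"

definition assumption_F :: "'a measure \<Rightarrow> ('a \<Rightarrow> ('a \<times> 'a) measure) \<Rightarrow> 'a measure
    \<Rightarrow> ('a \<Rightarrow> real) set \<Rightarrow> bool" where
  "assumption_F M P \<nu> F \<longleftrightarrow>
     F \<subseteq> borel_measurable M \<and>
     (\<forall>f\<in>F. \<forall>h\<in>F. (\<lambda>x. f x + h x) \<in> F) \<and>
     (\<forall>c::real. \<forall>f\<in>F. (\<lambda>x. c * f x) \<in> F) \<and>
     (\<forall>c::real. (\<lambda>_. c) \<in> F) \<and>
     (\<forall>f\<in>F. (\<lambda>x. (f x)\<^sup>2) \<in> F) \<and>
     (\<forall>f\<in>F. integrable \<nu> f) \<and>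
     (\<forall>f0\<in>F. \<forall>f1\<in>F.
        (\<forall>x\<in>space M. integrable (P x) (\<lambda>yz. f0 (fst yz) * f1 (snd yz))) \<and>
        Pop2 P (\<lambda>yz. f0 (fst yz) * f1 (snd yz)) \<in> F)"

definition assumption_F2 :: "'a measure \<Rightarrow> ('a \<Rightarrow> ('a \<times> 'a) measure)
    \<Rightarrow> ('a \<Rightarrow> real) set \<Rightarrow> 'a measure \<Rightarrow> real \<Rightarrow> bool" where
  "assumption_F2 M P F \<mu> \<alpha> \<longleftrightarrow>
     prob_space \<mu> \<and> sets \<mu> = sets M \<and>
     (\<forall>A\<in>sets M. (\<integral>x. (measure (P x) (A \<times> space M) + measure (P x) (space M \<times> A)) / 2 \<partial>\<mu>)
                   = measure \<mu> A) \<and>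
     (\<forall>f\<in>F. integrable \<mu> f) \<and> 0 < \<alpha> \<and> \<alpha> < 1 \<and>
     (\<forall>f\<in>F. \<exists>g\<in>F. \<forall>n. \<forall>x\<in>space M.
        \<bar>(Qop P ^^ n) f x - (\<integral>y. f y \<partial>\<mu>)\<bar> \<le> \<alpha> ^ n * g x)"

definition MA :: "(bool list \<Rightarrow> 'w \<Rightarrow> 'a) \<Rightarrow> bool list set \<Rightarrow> ('a \<Rightarrow> real) \<Rightarrow> 'w \<Rightarrow> real" where
  "MA X A f \<omega> = (\<Sum>i\<in>A. f (X i \<omega>))"

definition R0 :: "(bool list \<Rightarrow> 'w \<Rightarrow> 'a) \<Rightarrow> 'a measure \<Rightarrow> (nat \<Rightarrow> 'a \<Rightarrow> real)
    \<Rightarrow> (nat \<Rightarrow> nat) \<Rightarrow> nat \<Rightarrow> 'w \<Rightarrow> real" where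
  "R0 X \<mu> fs p n \<omega> =
     (1 / sqrt (real (card (Gen n)))) *
     (\<Sum>k<n - p n. MA X (Gen k) (\<lambda>x. fs (n - k) x - (\<integral>y. fs (n - k) y \<partial>\<mu>)) \<omega>)"

end

theory Submission
  imports Defs "HOL-Real_Asymp.Real_Asymp"
begin

lemma Gen_alt: "Gen k = {xs. set xs \<subseteq> UNIV \<and> length xs = k}"
  by (auto simp: Gen_def)

lemma Gen_finite: "finite (Gen k)"
  unfolding Gen_alt by (rule finite_lists_length_eq) simp

lemma card_Gen: "card (Gen k) = 2^k"
  unfolding Gen_alt by (subst card_lists_length_eq) auto

lemma sum_Gen_Suc:
  "(\<Sum>j\<in>Gen (Suc k). h j) = (\<Sum>i\<in>Gen k. h (i@[False]) + h (i@[True]))"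
proof -
  have eq: "Gen (Suc k) = (\<lambda>(i,b). i@[b]) ` (Gen k \<times> UNIV)"
  proof (intro equalityI subsetI)
    fix x assume "x \<in> Gen (Suc k)"
    then have "length x = Suc k" by (simp add: Gen_def)
    then have "x \<noteq> []" by auto
    then have "x = butlast x @ [last x]" by simp
    moreover have "butlast x \<in> Gen k" using \<open>length x = Suc k\<close> by (simp add: Gen_def)
    ultimately show "x \<in> (\<lambda>(i,b). i@[b]) ` (Gen k \<times> UNIV)"
      by (metis (no_types, lifting) SigmaI UNIV_I case_prod_conv image_eqI)
  qed (auto simp: Gen_def)
  have inj: "inj_on (\<lambda>(i,b). i@[b]) (Gen k \<times> (UNIV::bool set))"
    by (auto simp: inj_on_def)
  have "(\<Sum>j\<in>Gen (Suc k). h j) = (\<Sum>(i,b)\<in>Gen k \<times> UNIV. h (i@[b]))"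
    unfolding eq by (subst sum.reindex[OF inj]) (simp add: case_prod_beta')
  also have "\<dots> = (\<Sum>i\<in>Gen k. \<Sum>b\<in>UNIV. h (i@[b]))"
    by (subst sum.cartesian_product) simp
  also have "\<dots> = (\<Sum>i\<in>Gen k. h (i@[False]) + h (i@[True]))"
    by (simp add: UNIV_bool add.commute)
  finally show ?thesis .
qed

lemma kernel_prob:
  assumes kernel: "P \<in> M \<rightarrow>\<^sub>M prob_algebra (M \<Otimes>\<^sub>M M)" and x: "x \<in> space M"
  shows "prob_space (P x)" "sets (P x) = sets (M \<Otimes>\<^sub>M M)" "space (P x) = space M \<times> space M"
proof -
  have "P x \<in> space (prob_algebra (M \<Otimes>\<^sub>M M))" using measurable_space[OF kernel x] .
  then show ps: "prob_space (P x)" and s: "sets (P x) = sets (M \<Otimes>\<^sub>M M)"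
    by (auto simp: space_prob_algebra)
  show "space (P x) = space M \<times> space M"
    using sets_eq_imp_space_eq[OF s] by (simp add: space_pair_measure)
qed

lemma Pop3_one:
  assumes kernel: "P \<in> M \<rightarrow>\<^sub>M prob_algebra (M \<Otimes>\<^sub>M M)" and x: "x \<in> space M"
  shows "Pop3 P (\<lambda>_. 1) x = 1"
proof -
  interpret prob_space "P x" using kernel_prob[OF kernel x] by simp
  show ?thesis unfolding Pop3_def by (simp add: prob_space)
qed

lemma bmc_step_nn:
  assumes bmc: "is_BMC M \<Omega> X \<nu> P"
    and kernel: "P \<in> M \<rightarrow>\<^sub>M prob_algebra (M \<Otimes>\<^sub>M M)"
    and i: "i \<in> Gen k"
    and phi: "\<phi> \<in> borel_measurable (M \<Otimes>\<^sub>M M \<Otimes>\<^sub>M M)"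
    and bnd: "\<And>x. x \<in> space (M \<Otimes>\<^sub>M M \<Otimes>\<^sub>M M) \<Longrightarrow> 0 \<le> \<phi> x \<and> \<phi> x \<le> B"
  shows "(\<integral>\<^sup>+\<omega>. ennreal (\<phi> (X i \<omega>, X (i@[False]) \<omega>, X (i@[True]) \<omega>)) \<partial>\<Omega>)
       = (\<integral>\<^sup>+\<omega>. ennreal (Pop3 P \<phi> (X i \<omega>)) \<partial>\<Omega>)"
proof -
  have ps: "prob_space \<Omega>" and Xm: "\<And>j. X j \<in> \<Omega> \<rightarrow>\<^sub>M M" using bmc unfolding is_BMC_def by auto
  interpret prob_space \<Omega> by (rule ps)
  define Fk where "Fk = tree_filtr \<Omega> M X k"
  define h where "h = (\<lambda>\<omega>. \<phi> (X i \<omega>, X (i@[False]) \<omega>, X (i@[True]) \<omega>))"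
  have hm: "h \<in> borel_measurable \<Omega>" unfolding h_def
    by (intro measurable_compose[OF _ phi] measurable_Pair Xm)
  have inspace: "\<And>\<omega>. \<omega> \<in> space \<Omega> \<Longrightarrow> (X i \<omega>, X (i@[False]) \<omega>, X (i@[True]) \<omega>) \<in> space (M \<Otimes>\<^sub>M M \<Otimes>\<^sub>M M)"
    by (auto simp: space_pair_measure intro!: measurable_space[OF Xm])
  have hint: "integrable \<Omega> h"
    by (rule finite_measure.integrable_const_bound[where B=B])
       (use hm in \<open>auto intro!: AE_I2 finite_measure_axioms simp: h_def dest!: inspace bnd\<close>)
  let ?G = "\<Union>j\<in>Tree_upto k. {X j -` A \<inter> space \<Omega> | A. A \<in> sets M}"
  have G: "?G \<subseteq> sets \<Omega>" using Xm measurable_sets by blast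
  then have GP: "?G \<subseteq> Pow (space \<Omega>)" using sets.sets_into_space by blast
  have sub: "subalgebra \<Omega> Fk"
    unfolding subalgebra_def Fk_def tree_filtr_def
    using sigma_le_sets[OF GP] G by (simp add: space_measure_of_conv)
  interpret S: sigma_finite_subalgebra \<Omega> Fk
    by (rule finite_measure_subalgebra_is_sigma_finite)
       (simp add: finite_measure_subalgebra_def finite_measure_subalgebra_axioms_def sub finite_measure_axioms)
  define gg where "gg = (\<lambda>j::bool list. if j = i then \<phi> else (\<lambda>_::'a\<times>'a\<times>'a. 1::real))"
  have ggok: "\<forall>j. gg j \<in> borel_measurable (M \<Otimes>\<^sub>M M \<Otimes>\<^sub>M M) \<and> (\<exists>B. \<forall>x\<in>space (M \<Otimes>\<^sub>M M \<Otimes>\<^sub>M M). \<bar>gg j x\<bar> \<le> B)"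
  proof
    fix j
    have "\<forall>x\<in>space (M \<Otimes>\<^sub>M M \<Otimes>\<^sub>M M). \<bar>gg j x\<bar> \<le> max B 1"
      using bnd by (force simp: gg_def)
    then have A: "\<exists>B. \<forall>x\<in>space (M \<Otimes>\<^sub>M M \<Otimes>\<^sub>M M). \<bar>gg j x\<bar> \<le> B" by blast
    have Bm: "gg j \<in> borel_measurable (M \<Otimes>\<^sub>M M \<Otimes>\<^sub>M M)" using phi by (simp add: gg_def)
    show "gg j \<in> borel_measurable (M \<Otimes>\<^sub>M M \<Otimes>\<^sub>M M) \<and> (\<exists>B. \<forall>x\<in>space (M \<Otimes>\<^sub>M M \<Otimes>\<^sub>M M). \<bar>gg j x\<bar> \<le> B)"
      using A Bm by blast
  qed
  have AE1: "AE \<omega> in \<Omega>. real_cond_exp \<Omega> Fk (\<lambda>\<omega>. \<Prod>j\<in>Gen k. gg j (X j \<omega>, X (j @ [False]) \<omega>, X (j @ [True]) \<omega>)) \<omega>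
           = (\<Prod>j\<in>Gen k. Pop3 P (gg j) (X j \<omega>))"
    using bmc ggok unfolding is_BMC_def Fk_def by blast
  have prodL: "(\<lambda>\<omega>. \<Prod>j\<in>Gen k. gg j (X j \<omega>, X (j @ [False]) \<omega>, X (j @ [True]) \<omega>)) = h"
  proof
    fix \<omega>
    show "(\<Prod>j\<in>Gen k. gg j (X j \<omega>, X (j @ [False]) \<omega>, X (j @ [True]) \<omega>)) = h \<omega>"
      by (subst prod.remove[OF Gen_finite i]) (simp add: gg_def h_def)
  qed
  have prodR: "(\<Prod>j\<in>Gen k. Pop3 P (gg j) (X j \<omega>)) = Pop3 P \<phi> (X i \<omega>)" if "\<omega> \<in> space \<Omega>" for \<omega>
    by (subst prod.remove[OF Gen_finite i])
       (simp add: gg_def Pop3_one[OF kernel] measurable_space[OF Xm that])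
  have AE2: "AE \<omega> in \<Omega>. real_cond_exp \<Omega> Fk h \<omega> = Pop3 P \<phi> (X i \<omega>)"
    using AE1 by (auto simp: prodL prodR)
  have hpos: "AE \<omega> in \<Omega>. 0 \<le> h \<omega>" by (auto intro!: AE_I2 simp: h_def dest!: inspace bnd)
  have "(\<integral>\<^sup>+\<omega>. ennreal (Pop3 P \<phi> (X i \<omega>)) \<partial>\<Omega>) = (\<integral>\<^sup>+\<omega>. ennreal (real_cond_exp \<Omega> Fk h \<omega>) \<partial>\<Omega>)"
    by (rule nn_integral_cong_AE) (use AE2 in auto)
  also have "\<dots> = ennreal (\<integral>\<omega>. real_cond_exp \<Omega> Fk h \<omega> \<partial>\<Omega>)"
    by (rule nn_integral_eq_integral[OF S.real_cond_exp_int(1)[OF hint] S.real_cond_exp_pos[OF hpos hm]])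
  also have "\<dots> = ennreal (\<integral>\<omega>. h \<omega> \<partial>\<Omega>)" by (simp add: S.real_cond_exp_int(2)[OF hint])
  also have "\<dots> = (\<integral>\<^sup>+\<omega>. ennreal (h \<omega>) \<partial>\<Omega>)" by (rule nn_integral_eq_integral[OF hint hpos, symmetric])
  finally show ?thesis by (simp add: h_def)
qed

lemma assmF_D:
  assumes "assumption_F M P \<nu> F"
  shows "F \<subseteq> borel_measurable M"
    and "f \<in> F \<Longrightarrow> h \<in> F \<Longrightarrow> (\<lambda>x. f x + h x) \<in> F"
    and "f \<in> F \<Longrightarrow> (\<lambda>x. c * f x) \<in> F"
    and "(\<lambda>_. c) \<in> F"
    and "f \<in> F \<Longrightarrow> (\<lambda>x. (f x)\<^sup>2) \<in> F"
    and "f \<in> F \<Longrightarrow> integrable \<nu> f"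
    and "f0 \<in> F \<Longrightarrow> f1 \<in> F \<Longrightarrow> x \<in> space M \<Longrightarrow> integrable (P x) (\<lambda>yz. f0 (fst yz) * f1 (snd yz))"
    and "f0 \<in> F \<Longrightarrow> f1 \<in> F \<Longrightarrow> Pop2 P (\<lambda>yz. f0 (fst yz) * f1 (snd yz)) \<in> F"
  using assms unfolding assumption_F_def by auto

lemma Qop_F:
  assumes F: "assumption_F M P \<nu> F" and f: "f \<in> F"
  shows "Qop P f \<in> F"
proof -
  note one = assmF_D(4)[OF F, of 1]
  have a: "Pop2 P (\<lambda>yz. f (fst yz) * (\<lambda>_. 1::real) (snd yz)) \<in> F"
    by (rule assmF_D(8)[OF F f one])
  have b: "Pop2 P (\<lambda>yz. (\<lambda>_. 1::real) (fst yz) * f (snd yz)) \<in> F"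
    by (rule assmF_D(8)[OF F one f])
  have "(\<lambda>x. (1/2) * (Pop2 P (\<lambda>yz. f (fst yz) * (\<lambda>_. 1::real) (snd yz)) x
                 + Pop2 P (\<lambda>yz. (\<lambda>_. 1::real) (fst yz) * f (snd yz)) x)) \<in> F"
    by (rule assmF_D(3)[OF F assmF_D(2)[OF F a b]])
  also have "(\<lambda>x. (1/2) * (Pop2 P (\<lambda>yz. f (fst yz) * (\<lambda>_. 1::real) (snd yz)) x
                 + Pop2 P (\<lambda>yz. (\<lambda>_. 1::real) (fst yz) * f (snd yz)) x)) = Qop P f"
    by (rule ext) (simp add: Pop2_def Qop_def)
  finally show ?thesis .
qed

lemma Qop_int:
  assumes F: "assumption_F M P \<nu> F" and f: "f \<in> F" and x: "x \<in> space M"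
  shows "integrable (P x) (\<lambda>yz. f (fst yz))" "integrable (P x) (\<lambda>yz. f (snd yz))"
proof -
  note one = assmF_D(4)[OF F, of 1]
  have "integrable (P x) (\<lambda>yz. f (fst yz) * (\<lambda>_. 1::real) (snd yz))"
    by (rule assmF_D(7)[OF F f one x])
  then show "integrable (P x) (\<lambda>yz. f (fst yz))" by simp
  have "integrable (P x) (\<lambda>yz. (\<lambda>_. 1::real) (fst yz) * f (snd yz))"
    by (rule assmF_D(7)[OF F one f x])
  then show "integrable (P x) (\<lambda>yz. f (snd yz))" by simp
qed

lemma Qop_nonneg:
  assumes kernel: "P \<in> M \<rightarrow>\<^sub>M prob_algebra (M \<Otimes>\<^sub>M M)"
    and fpos: "\<forall>x\<in>space M. 0 \<le> f x" and x: "x \<in> space M"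
  shows "0 \<le> Qop P f x"
proof -
  have sp: "space (P x) = space M \<times> space M" using kernel_prob[OF kernel x] by simp
  have "0 \<le> (\<integral>yz. f (fst yz) \<partial>P x)" by (rule Bochner_Integration.integral_nonneg) (use fpos sp in auto)
  moreover have "0 \<le> (\<integral>yz. f (snd yz) \<partial>P x)" by (rule Bochner_Integration.integral_nonneg) (use fpos sp in auto)
  ultimately show ?thesis by (simp add: Qop_def)
qed

lemma SUP_min2:
  fixes a b :: real
  assumes "0 \<le> a" "0 \<le> b"
  shows "(SUP N::nat. ennreal (min a (real N) + min b (real N))) = ennreal (a + b)"
proof (rule antisym)
  show "(SUP N::nat. ennreal (min a (real N) + min b (real N))) \<le> ennreal (a + b)"
    by (rule SUP_least) (auto intro!: ennreal_leI)
  obtain N :: nat where N: "max a b \<le> real N" using real_arch_simple by blast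
  then have "ennreal (a + b) = ennreal (min a (real N) + min b (real N))" by simp
  also have "\<dots> \<le> (SUP N::nat. ennreal (min a (real N) + min b (real N)))" by (rule SUP_upper) simp
  finally show "ennreal (a + b) \<le> (SUP N::nat. ennreal (min a (real N) + min b (real N)))" .
qed

lemma step_bound:
  assumes bmc: "is_BMC M \<Omega> X \<nu> P"
    and kernel: "P \<in> M \<rightarrow>\<^sub>M prob_algebra (M \<Otimes>\<^sub>M M)"
    and F: "assumption_F M P \<nu> F" and f: "f \<in> F" and fpos: "\<forall>x\<in>space M. 0 \<le> f x"
    and i: "i \<in> Gen k"
  shows "(\<integral>\<^sup>+\<omega>. ennreal (f (X (i@[False]) \<omega>)) + ennreal (f (X (i@[True]) \<omega>)) \<partial>\<Omega>)
         \<le> 2 * (\<integral>\<^sup>+\<omega>. ennreal (Qop P f (X i \<omega>)) \<partial>\<Omega>)"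
proof -
  have Xm: "\<And>j. X j \<in> \<Omega> \<rightarrow>\<^sub>M M" using bmc unfolding is_BMC_def by auto
  have fm[measurable]: "f \<in> borel_measurable M" using assmF_D(1)[OF F] f by blast
  have Qm[measurable]: "Qop P f \<in> borel_measurable M"
    using assmF_D(1)[OF F] Qop_F[OF F f] by blast
  define \<phi> where "\<phi> = (\<lambda>(N::nat) (t::'a\<times>'a\<times>'a). min (f (fst (snd t))) (real N) + min (f (snd (snd t))) (real N))"
  have \<phi>m: "\<phi> N \<in> borel_measurable (M \<Otimes>\<^sub>M M \<Otimes>\<^sub>M M)" for N
    unfolding \<phi>_def by measurable
  have \<phi>b: "0 \<le> \<phi> N t \<and> \<phi> N t \<le> 2 * real N" if "t \<in> space (M \<Otimes>\<^sub>M M \<Otimes>\<^sub>M M)" for N t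
    using that fpos by (auto simp: \<phi>_def space_pair_measure)
  have Qm2: "(\<lambda>\<omega>. ennreal (Qop P f (X i \<omega>))) \<in> borel_measurable \<Omega>"
    using measurable_compose[OF measurable_compose[OF Xm Qm] measurable_ennreal] by (simp add: comp_def)
  have Pop_le: "Pop3 P (\<phi> N) x \<le> 2 * Qop P f x" if x: "x \<in> space M" for N x
  proof -
    interpret px: prob_space "P x" using kernel_prob[OF kernel x] by simp
    have sets: "sets (P x) = sets (M \<Otimes>\<^sub>M M)" using kernel_prob[OF kernel x] by simp
    have sp: "space (P x) = space M \<times> space M" using kernel_prob[OF kernel x] by simp
    note i1 = Qop_int[OF F f x]
    have c: "integrable (P x) (\<lambda>_. real N)" by simp
    have m1: "integrable (P x) (\<lambda>yz. min (f (fst yz)) (real N))" by (rule integrable_min[OF i1(1) c])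
    have m2: "integrable (P x) (\<lambda>yz. min (f (snd yz)) (real N))" by (rule integrable_min[OF i1(2) c])
    have "Pop3 P (\<phi> N) x = (\<integral>yz. min (f (fst yz)) (real N) + min (f (snd yz)) (real N) \<partial>P x)"
      by (simp add: Pop3_def \<phi>_def)
    also have "\<dots> \<le> (\<integral>yz. f (fst yz) + f (snd yz) \<partial>P x)"
      by (rule integral_mono) (use m1 m2 i1 in auto)
    also have "\<dots> = 2 * Qop P f x" using i1 by (simp add: Qop_def)
    finally show ?thesis .
  qed
  have eachN: "(\<integral>\<^sup>+\<omega>. ennreal (\<phi> N (X i \<omega>, X (i@[False]) \<omega>, X (i@[True]) \<omega>)) \<partial>\<Omega>)
         \<le> 2 * (\<integral>\<^sup>+\<omega>. ennreal (Qop P f (X i \<omega>)) \<partial>\<Omega>)" for N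
  proof -
    have "(\<integral>\<^sup>+\<omega>. ennreal (\<phi> N (X i \<omega>, X (i@[False]) \<omega>, X (i@[True]) \<omega>)) \<partial>\<Omega>)
        = (\<integral>\<^sup>+\<omega>. ennreal (Pop3 P (\<phi> N) (X i \<omega>)) \<partial>\<Omega>)"
      by (rule bmc_step_nn[OF bmc kernel i \<phi>m \<phi>b])
    also have "\<dots> \<le> (\<integral>\<^sup>+\<omega>. 2 * ennreal (Qop P f (X i \<omega>)) \<partial>\<Omega>)"
    proof (rule nn_integral_mono)
      fix \<omega> assume "\<omega> \<in> space \<Omega>"
      then have xs: "X i \<omega> \<in> space M" by (rule measurable_space[OF Xm])
      have "ennreal (Pop3 P (\<phi> N) (X i \<omega>)) \<le> ennreal (2 * Qop P f (X i \<omega>))"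
        by (rule ennreal_leI) (rule Pop_le[OF xs])
      also have "\<dots> = 2 * ennreal (Qop P f (X i \<omega>))"
        using Qop_nonneg[OF kernel fpos xs] by (simp add: ennreal_mult)
      finally show "ennreal (Pop3 P (\<phi> N) (X i \<omega>)) \<le> 2 * ennreal (Qop P f (X i \<omega>))" .
    qed
    also have "\<dots> = 2 * (\<integral>\<^sup>+\<omega>. ennreal (Qop P f (X i \<omega>)) \<partial>\<Omega>)"
      by (rule nn_integral_cmult[OF Qm2])
    finally show ?thesis .
  qed
  have gm: "(\<lambda>\<omega>. ennreal (\<phi> N (X i \<omega>, X (i@[False]) \<omega>, X (i@[True]) \<omega>))) \<in> borel_measurable \<Omega>" for N
    using measurable_compose[OF measurable_compose[OF measurable_Pair[OF Xm measurable_Pair[OF Xm Xm]] \<phi>m] measurable_ennreal]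
    by (simp add: comp_def)
  have inc: "incseq (\<lambda>N \<omega>. ennreal (\<phi> N (X i \<omega>, X (i@[False]) \<omega>, X (i@[True]) \<omega>)))"
    unfolding incseq_def le_fun_def \<phi>_def by (intro allI impI ennreal_leI add_mono min.mono) auto
  have "(\<integral>\<^sup>+\<omega>. ennreal (f (X (i@[False]) \<omega>)) + ennreal (f (X (i@[True]) \<omega>)) \<partial>\<Omega>)
      = (\<integral>\<^sup>+\<omega>. (SUP N. ennreal (\<phi> N (X i \<omega>, X (i@[False]) \<omega>, X (i@[True]) \<omega>))) \<partial>\<Omega>)"
  proof (rule nn_integral_cong)
    fix \<omega> assume "\<omega> \<in> space \<Omega>"
    then have a: "0 \<le> f (X (i@[False]) \<omega>)" and b: "0 \<le> f (X (i@[True]) \<omega>)"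
      using fpos measurable_space[OF Xm] by auto
    show "ennreal (f (X (i@[False]) \<omega>)) + ennreal (f (X (i@[True]) \<omega>))
        = (SUP N. ennreal (\<phi> N (X i \<omega>, X (i@[False]) \<omega>, X (i@[True]) \<omega>)))"
      using SUP_min2[OF a b] a b by (simp add: \<phi>_def ennreal_plus)
  qed
  also have "\<dots> = (SUP N. \<integral>\<^sup>+\<omega>. ennreal (\<phi> N (X i \<omega>, X (i@[False]) \<omega>, X (i@[True]) \<omega>)) \<partial>\<Omega>)"
    by (rule nn_integral_monotone_convergence_SUP[OF inc gm])
  also have "\<dots> \<le> 2 * (\<integral>\<^sup>+\<omega>. ennreal (Qop P f (X i \<omega>)) \<partial>\<Omega>)"
    by (rule SUP_least) (rule eachN)
  finally show ?thesis .
qed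

lemma funpow_Qop_F:
  assumes F: "assumption_F M P \<nu> F" and f: "f \<in> F"
  shows "(Qop P ^^ k) f \<in> F"
  by (induction k) (auto intro: Qop_F[OF F] simp: f)

lemma moment_bound:
  assumes bmc: "is_BMC M \<Omega> X \<nu> P"
    and kernel: "P \<in> M \<rightarrow>\<^sub>M prob_algebra (M \<Otimes>\<^sub>M M)"
    and F: "assumption_F M P \<nu> F"
  shows "f \<in> F \<Longrightarrow> \<forall>x\<in>space M. 0 \<le> f x \<Longrightarrow>
    (\<integral>\<^sup>+\<omega>. (\<Sum>j\<in>Gen k. ennreal (f (X j \<omega>))) \<partial>\<Omega>) \<le> 2^k * (\<integral>\<^sup>+x. ennreal ((Qop P ^^ k) f x) \<partial>\<nu>)"
proof (induction k arbitrary: f)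
  have Xm: "\<And>j. X j \<in> \<Omega> \<rightarrow>\<^sub>M M" and nu: "distr \<Omega> M (X []) = \<nu>" using bmc unfolding is_BMC_def by auto
  case 0
  have fm: "f \<in> borel_measurable M" using assmF_D(1)[OF F] 0 by blast
  have G0: "Gen 0 = {[]}" by (auto simp: Gen_def)
  have "(\<integral>\<^sup>+x. ennreal (f x) \<partial>\<nu>) = (\<integral>\<^sup>+\<omega>. ennreal (f (X [] \<omega>)) \<partial>\<Omega>)"
    unfolding nu[symmetric] by (rule nn_integral_distr[OF Xm]) (use fm in simp)
  then show ?case by (simp add: G0)
next
  have Xm: "\<And>j. X j \<in> \<Omega> \<rightarrow>\<^sub>M M" using bmc unfolding is_BMC_def by auto
  case (Suc k)
  have fm: "f \<in> borel_measurable M" using assmF_D(1)[OF F] Suc.prems by blast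
  have QF: "Qop P f \<in> F" by (rule Qop_F[OF F Suc.prems(1)])
  have Qm: "Qop P f \<in> borel_measurable M" using assmF_D(1)[OF F] QF by blast
  have Qpos: "\<forall>x\<in>space M. 0 \<le> Qop P f x" using Qop_nonneg[OF kernel Suc.prems(2)] by blast
  have me: "(\<lambda>\<omega>. ennreal (h (X j \<omega>))) \<in> borel_measurable \<Omega>" if "h \<in> borel_measurable M" for h j
    using measurable_compose[OF measurable_compose[OF Xm that] measurable_ennreal] by (simp add: comp_def)
  have "(\<integral>\<^sup>+\<omega>. (\<Sum>j\<in>Gen (Suc k). ennreal (f (X j \<omega>))) \<partial>\<Omega>)
      = (\<integral>\<^sup>+\<omega>. (\<Sum>i\<in>Gen k. ennreal (f (X (i@[False]) \<omega>)) + ennreal (f (X (i@[True]) \<omega>))) \<partial>\<Omega>)"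
    by (simp add: sum_Gen_Suc)
  also have "\<dots> = (\<Sum>i\<in>Gen k. \<integral>\<^sup>+\<omega>. ennreal (f (X (i@[False]) \<omega>)) + ennreal (f (X (i@[True]) \<omega>)) \<partial>\<Omega>)"
    by (rule nn_integral_sum) (use me[OF fm] in auto)
  also have "\<dots> \<le> (\<Sum>i\<in>Gen k. 2 * (\<integral>\<^sup>+\<omega>. ennreal (Qop P f (X i \<omega>)) \<partial>\<Omega>))"
    by (rule sum_mono) (rule step_bound[OF bmc kernel F Suc.prems])
  also have "\<dots> = 2 * (\<integral>\<^sup>+\<omega>. (\<Sum>i\<in>Gen k. ennreal (Qop P f (X i \<omega>))) \<partial>\<Omega>)"
    by (subst nn_integral_sum) (use me[OF Qm] in \<open>auto simp: sum_distrib_left\<close>)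
  also have "\<dots> \<le> 2 * (2^k * (\<integral>\<^sup>+x. ennreal ((Qop P ^^ k) (Qop P f) x) \<partial>\<nu>))"
    by (rule mult_left_mono[OF Suc.IH[OF QF Qpos]]) simp
  also have "\<dots> = 2^Suc k * (\<integral>\<^sup>+x. ennreal ((Qop P ^^ Suc k) f x) \<partial>\<nu>)"
    by (simp add: funpow_Suc_right mult.assoc del: funpow.simps)
  finally show ?case .
qed

lemma pw_bound:
  fixes Y T :: "nat \<Rightarrow> bool list \<Rightarrow> real"
  assumes hb: "\<And>k i. k < N \<Longrightarrow> i \<in> Gen k \<Longrightarrow> (Y k i)\<^sup>2 \<le> T k i"
  shows "((1 / sqrt (real (card (Gen n)))) * (\<Sum>k<N. \<Sum>i\<in>Gen k. Y k i))\<^sup>2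
         \<le> (\<Sum>k<N. (real N * 2^k / 2^n) * (\<Sum>i\<in>Gen k. T k i))"
proof -
  define S where "S k = (\<Sum>i\<in>Gen k. Y k i)" for k
  have Sk: "(S k)\<^sup>2 \<le> 2^k * (\<Sum>i\<in>Gen k. T k i)" if "k < N" for k
  proof -
    have "(S k)\<^sup>2 \<le> (\<Sum>i\<in>Gen k. (Y k i)\<^sup>2) * real (card (Gen k))"
      unfolding S_def by (rule sum_squared_le_sum_of_squares)
    also have "\<dots> \<le> (\<Sum>i\<in>Gen k. T k i) * real (card (Gen k))"
      by (intro mult_right_mono sum_mono hb that) auto
    finally show ?thesis by (simp add: card_Gen mult.commute)
  qed
  have "(\<Sum>k<N. S k)\<^sup>2 \<le> (\<Sum>k<N. (S k)\<^sup>2) * real (card {..<N})"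
    by (rule sum_squared_le_sum_of_squares)
  also have "\<dots> \<le> (\<Sum>k<N. 2^k * (\<Sum>i\<in>Gen k. T k i)) * real N"
    unfolding card_lessThan by (intro mult_right_mono sum_mono Sk) auto
  finally have main: "(\<Sum>k<N. S k)\<^sup>2 \<le> (\<Sum>k<N. 2^k * (\<Sum>i\<in>Gen k. T k i)) * real N" .
  have "((1 / sqrt (real (card (Gen n)))) * (\<Sum>k<N. S k))\<^sup>2 = (\<Sum>k<N. S k)\<^sup>2 / 2^n"
    by (simp add: card_Gen power_mult_distrib power_divide)
  also have "\<dots> \<le> (\<Sum>k<N. 2^k * (\<Sum>i\<in>Gen k. T k i)) * real N / 2^n"
    by (rule divide_right_mono[OF main]) simp
  also have "\<dots> = (\<Sum>k<N. (real N * 2^k / 2^n) * (\<Sum>i\<in>Gen k. T k i))"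
    by (simp add: sum_distrib_left sum_distrib_right sum_divide_distrib mult_ac)
  finally show ?thesis by (simp add: S_def)
qed

lemma geom4: "(\<Sum>k<N. (4::real)^k) \<le> 4^N"
proof (induction N)
  case (Suc N)
  have a: "(0::real) \<le> 4^N" by simp
  have b: "(\<Sum>k<Suc N. (4::real)^k) = (\<Sum>k<N. 4^k) + 4^N" by simp
  have c: "(4::real)^Suc N = 4 * 4^N" by simp
  show ?case unfolding b c using Suc.IH a by linarith
qed simp

lemma lim_part:
  fixes p :: "nat \<Rightarrow> nat" and C :: real
  assumes p_less: "\<forall>n\<ge>2. p n < n"
    and p_ratio: "(\<lambda>n. real (p n) / real n) \<longlonglongrightarrow> 1"
    and C: "0 \<le> C"
  shows "(\<lambda>n. real (n - p n) * C * 4^(n - p n) / 2^n) \<longlonglongrightarrow> 0"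
proof (rule tendsto_sandwich[where f="\<lambda>_. 0" and h="\<lambda>n. C * (real n * 2 powr (-(real n)/2))"])
  show "\<forall>\<^sub>F n in sequentially. 0 \<le> real (n - p n) * C * 4^(n - p n) / 2^n"
    using C by simp
  have ev1: "\<forall>\<^sub>F n in sequentially. 3/4 < real (p n) / real n"
    by (rule order_tendstoD(1)[OF p_ratio]) simp
  have ev2: "\<forall>\<^sub>F n in sequentially. n \<ge> 2" by (rule eventually_ge_at_top)
  show "\<forall>\<^sub>F n in sequentially. real (n - p n) * C * 4^(n - p n) / 2^n \<le> C * (real n * 2 powr (-(real n)/2))"
    using ev1 ev2
  proof eventually_elim
    case (elim n)
    have pn: "p n < n" using p_less elim(2) by auto
    have npos: "0 < real n" using elim(2) by simp
    have rN: "real (n - p n) = real n - real (p n)" using pn by simp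
    have "3/4 * real n < real (p n)" using elim(1) npos by (simp add: field_simps)
    then have Nle: "real (n - p n) \<le> real n / 4" using rN by simp
    have "(4::real)^(n - p n) / 2^n = 2 powr (2 * real (n - p n) - real n)"
    proof -
      have "(4::real)^(n - p n) = 2 powr (2 * real (n - p n))"
        by (simp add: powr_realpow[symmetric] powr_mult[symmetric] power_mult[symmetric]
                      powr_powr[symmetric])
      moreover have "(2::real)^n = 2 powr real n" by (simp add: powr_realpow)
      ultimately show ?thesis by (simp add: powr_diff)
    qed
    also have "\<dots> \<le> 2 powr (-(real n)/2)" using Nle by (intro powr_mono) auto
    finally have q: "(4::real)^(n - p n) / 2^n \<le> 2 powr (-(real n)/2)" .
    have "real (n - p n) * C * 4^(n - p n) / 2^n = C * (real (n - p n) * ((4::real)^(n - p n) / 2^n))"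
      by simp
    also have "\<dots> \<le> C * (real n * 2 powr (-(real n)/2))"
      using Nle npos q C by (intro mult_left_mono mult_mono) auto
    finally show ?case .
  qed
  have "(\<lambda>n. real n * 2 powr (-(real n)/2)) \<longlonglongrightarrow> 0" by real_asymp
  then show "(\<lambda>n. C * (real n * 2 powr (-(real n)/2))) \<longlonglongrightarrow> 0"
    by (rule tendsto_mult_right_zero)
qed simp

theorem lemma4p1:
  fixes M :: "'a measure" and \<Omega> :: "'w measure" and X :: "bool list \<Rightarrow> 'w \<Rightarrow> 'a"
    and \<nu> \<mu> :: "'a measure" and P :: "'a \<Rightarrow> ('a \<times> 'a) measure"
    and F :: "('a \<Rightarrow> real) set" and \<alpha> :: real
    and fs :: "nat \<Rightarrow> 'a \<Rightarrow> real" and g :: "'a \<Rightarrow> real" and p :: "nat \<Rightarrow> nat"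
  assumes kernel: "P \<in> M \<rightarrow>\<^sub>M prob_algebra (M \<Otimes>\<^sub>M M)"
    and init: "prob_space \<nu>" "sets \<nu> = sets M"
    and bmc: "is_BMC M \<Omega> X \<nu> P"
    and F: "assumption_F M P \<nu> F"
    and F2: "assumption_F2 M P F \<mu> \<alpha>"
    and alpha: "\<alpha> < 1 / sqrt 2"
    and fs_F: "\<forall>l. fs l \<in> F"
    and g_F: "g \<in> F"
    and bound1: "\<forall>n l. \<forall>x\<in>space M. \<bar>(Qop P ^^ n) (fs l) x\<bar> \<le> g x"
    and bound2: "\<forall>n l. \<forall>x\<in>space M.
                   \<bar>(Qop P ^^ n) (fs l) x - (\<integral>y. fs l y \<partial>\<mu>)\<bar> \<le> \<alpha> ^ n * g x"
    and p_mono: "mono p"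
    and p_pos: "\<forall>n. 0 < p n"
    and p_less: "\<forall>n\<ge>2. p n < n"
    and p_ratio: "(\<lambda>n. real (p n) / real n) \<longlonglongrightarrow> 1"
    and p_gap: "\<forall>c::real>0. filterlim (\<lambda>n. real n - real (p n) - c * ln (real n)) at_top sequentially"
  shows "(\<lambda>n. \<integral>\<^sup>+\<omega>. ennreal ((R0 X \<mu> fs p n \<omega>)\<^sup>2) \<partial>\<Omega>) \<longlonglongrightarrow> 0"
proof -
  have ps: "prob_space \<Omega>" and Xm: "\<And>j. X j \<in> \<Omega> \<rightarrow>\<^sub>M M" using bmc unfolding is_BMC_def by auto
  interpret prob_space \<Omega> by (rule ps)
  interpret nu: prob_space \<nu> by (rule init(1))
  have spnu: "space \<nu> = space M" using sets_eq_imp_space_eq[OF init(2)] .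
  have smu: "sets \<mu> = sets M" and muint: "\<forall>f\<in>F. integrable \<mu> f"
     and F2G: "\<forall>f\<in>F. \<exists>g\<in>F. \<forall>n. \<forall>x\<in>space M. \<bar>(Qop P ^^ n) f x - (\<integral>y. f y \<partial>\<mu>)\<bar> \<le> \<alpha> ^ n * g x"
     and a0: "0 < \<alpha>" "\<alpha> < 1"
    using F2 unfolding assumption_F2_def by auto
  have spmu: "space \<mu> = space M" using sets_eq_imp_space_eq[OF smu] .
  define m where "m = (\<integral>y. g y \<partial>\<mu>)"
  define c where "c l = (\<integral>y. fs l y \<partial>\<mu>)" for l
  have fsg: "\<bar>fs l x\<bar> \<le> g x" if "x \<in> space M" for l x
    using bound1 that by (metis funpow_0)
  have cle: "\<bar>c l\<bar> \<le> m" for l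
  proof -
    have i1: "integrable \<mu> (fs l)" "integrable \<mu> g" using muint fs_F g_F by auto
    have neg: "- g y \<le> fs l y" if "y \<in> space M" for y
      using fsg[OF that] by (metis abs_le_iff minus_le_iff)
    have "c l \<le> m" unfolding c_def m_def
      by (rule integral_mono[OF i1]) (use fsg spmu in \<open>auto simp: abs_le_iff\<close>)
    moreover have "(\<integral>y. - g y \<partial>\<mu>) \<le> c l" unfolding c_def
      by (rule integral_mono[OF integrable_minus[OF i1(2)] i1(1)]) (use spmu neg in auto)
    ultimately show ?thesis by (simp add: m_def)
  qed
  define G where "G = (\<lambda>x. 2 * (g x)\<^sup>2 + 2 * m\<^sup>2)"
  have GF: "G \<in> F"
  proof -
    have g2: "(\<lambda>x. (g x)\<^sup>2) \<in> F" by (rule assmF_D(5)[OF F g_F])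
    have "(\<lambda>x. 2 * (g x)\<^sup>2) \<in> F" by (rule assmF_D(3)[OF F g2])
    from assmF_D(2)[OF F this assmF_D(4)[OF F, of "2 * m\<^sup>2"]] show ?thesis by (simp add: G_def)
  qed
  have Gpos: "\<forall>x\<in>space M. 0 \<le> G x" by (simp add: G_def)
  have Gm: "G \<in> borel_measurable M" using assmF_D(1)[OF F] GF by blast
  have hG: "(fs l x - c l)\<^sup>2 \<le> G x" if x: "x \<in> space M" for l x
  proof -
    have fl: "\<bar>fs l x\<bar> \<le> g x" using fsg[OF x] by blast
    have A: "(fs l x)\<^sup>2 \<le> (g x)\<^sup>2" using power_mono[OF fl abs_ge_zero, of 2] by simp
    have B: "(c l)\<^sup>2 \<le> m\<^sup>2" using power_mono[OF cle[of l] abs_ge_zero, of 2] by simp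
    have eq: "2 * (fs l x)\<^sup>2 + 2 * (c l)\<^sup>2 - (fs l x - c l)\<^sup>2 = (fs l x + c l)\<^sup>2"
      by (simp add: power2_eq_square algebra_simps)
    have z: "0 \<le> (fs l x + c l)\<^sup>2" by simp
    show ?thesis unfolding G_def using A B eq z by linarith
  qed
  define cG where "cG = (\<integral>y. G y \<partial>\<mu>)"
  obtain H where HF: "H \<in> F" and Hb: "\<forall>n. \<forall>x\<in>space M. \<bar>(Qop P ^^ n) G x - cG\<bar> \<le> \<alpha> ^ n * H x"
    using F2G GF unfolding cG_def by blast
  have Hpos: "0 \<le> H x" if "x \<in> space M" for x
    using Hb that by (metis abs_ge_zero funpow_0 mult_1 power_0 order_trans)
  have Qle: "(Qop P ^^ k) G x \<le> cG + H x" if x: "x \<in> space M" for k x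
  proof -
    have "\<alpha> ^ k * H x \<le> 1 * H x"
      by (rule mult_right_mono[OF _ Hpos[OF x]]) (use a0 in \<open>simp add: power_le_one\<close>)
    then show ?thesis using Hb x by (smt (verit))
  qed
  have Qnn: "\<forall>x\<in>space M. 0 \<le> (Qop P ^^ k) G x" for k
  proof (induction k)
    case 0 then show ?case using Gpos by simp
  next
    case (Suc k) then show ?case using Qop_nonneg[OF kernel Suc] by simp
  qed
  have cG0: "0 \<le> cG" unfolding cG_def by (rule Bochner_Integration.integral_nonneg) (use Gpos spmu in auto)
  have Hint: "integrable \<nu> H" by (rule assmF_D(6)[OF F HF])
  define C where "C = cG + (\<integral>x. H x \<partial>\<nu>)"
  have C0: "0 \<le> C" unfolding C_def
    using cG0 Bochner_Integration.integral_nonneg[of \<nu> H] Hpos spnu by auto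
  have intQ: "(\<integral>\<^sup>+x. ennreal ((Qop P ^^ k) G x) \<partial>\<nu>) \<le> ennreal C" for k
  proof -
    have "(\<integral>\<^sup>+x. ennreal ((Qop P ^^ k) G x) \<partial>\<nu>) \<le> (\<integral>\<^sup>+x. ennreal (cG + H x) \<partial>\<nu>)"
      by (rule nn_integral_mono) (use Qle spnu in \<open>auto intro: ennreal_leI\<close>)
    also have "\<dots> = ennreal (\<integral>x. cG + H x \<partial>\<nu>)"
      by (rule nn_integral_eq_integral) (use Hint Hpos spnu cG0 in auto)
    also have "\<dots> = ennreal C" using Hint by (simp add: C_def nu.prob_space)
    finally show ?thesis .
  qed
  have momG: "(\<integral>\<^sup>+\<omega>. (\<Sum>j\<in>Gen k. ennreal (G (X j \<omega>))) \<partial>\<Omega>) \<le> 2^k * ennreal C" for k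
    using order_trans[OF moment_bound[OF bmc kernel F GF Gpos] mult_left_mono[OF intQ]] by simp
  define b where "b n = real (n - p n) * C * 4^(n - p n) / 2^n" for n
  have Em: "(\<lambda>\<omega>. \<Sum>i\<in>Gen k. ennreal (G (X i \<omega>))) \<in> borel_measurable \<Omega>" for k
  proof (rule borel_measurable_sum)
    fix i
    show "(\<lambda>\<omega>. ennreal (G (X i \<omega>))) \<in> borel_measurable \<Omega>"
      using measurable_compose[OF measurable_compose[OF Xm Gm] measurable_ennreal] by (simp add: comp_def)
  qed
  have bound: "(\<integral>\<^sup>+\<omega>. ennreal ((R0 X \<mu> fs p n \<omega>)\<^sup>2) \<partial>\<Omega>) \<le> ennreal (b n)" for n
  proof -
    define N where "N = n - p n"
    define aa where "aa k = real N * 2^k / 2^n" for k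
    have aa0: "0 \<le> aa k" for k by (simp add: aa_def)
    have "(\<integral>\<^sup>+\<omega>. ennreal ((R0 X \<mu> fs p n \<omega>)\<^sup>2) \<partial>\<Omega>)
        \<le> (\<integral>\<^sup>+\<omega>. (\<Sum>k<N. ennreal (aa k) * (\<Sum>i\<in>Gen k. ennreal (G (X i \<omega>)))) \<partial>\<Omega>)"
    proof (rule nn_integral_mono)
      fix \<omega> assume \<omega>: "\<omega> \<in> space \<Omega>"
      have xs: "X i \<omega> \<in> space M" for i using measurable_space[OF Xm \<omega>] .
      have "(R0 X \<mu> fs p n \<omega>)\<^sup>2 = ((1 / sqrt (real (card (Gen n)))) *
             (\<Sum>k<N. \<Sum>i\<in>Gen k. fs (n - k) (X i \<omega>) - c (n - k)))\<^sup>2"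
        by (simp add: R0_def MA_def c_def N_def)
      also have "\<dots> \<le> (\<Sum>k<N. aa k * (\<Sum>i\<in>Gen k. G (X i \<omega>)))"
        unfolding aa_def by (rule pw_bound) (rule hG[OF xs])
      finally have le: "(R0 X \<mu> fs p n \<omega>)\<^sup>2 \<le> (\<Sum>k<N. aa k * (\<Sum>i\<in>Gen k. G (X i \<omega>)))" .
      have nn: "0 \<le> (\<Sum>i\<in>Gen k. G (X i \<omega>))" for k using Gpos xs by (simp add: sum_nonneg)
      have "ennreal ((R0 X \<mu> fs p n \<omega>)\<^sup>2) \<le> ennreal (\<Sum>k<N. aa k * (\<Sum>i\<in>Gen k. G (X i \<omega>)))"
        by (rule ennreal_leI[OF le])
      also have "\<dots> = (\<Sum>k<N. ennreal (aa k * (\<Sum>i\<in>Gen k. G (X i \<omega>))))"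
        by (rule sum_ennreal[symmetric]) (use aa0 nn in simp)
      also have "\<dots> = (\<Sum>k<N. ennreal (aa k) * (\<Sum>i\<in>Gen k. ennreal (G (X i \<omega>))))"
      proof (rule sum.cong[OF refl])
        fix k
        have "ennreal (aa k * (\<Sum>i\<in>Gen k. G (X i \<omega>))) = ennreal (aa k) * ennreal (\<Sum>i\<in>Gen k. G (X i \<omega>))"
          by (rule ennreal_mult[OF aa0 nn])
        also have "ennreal (\<Sum>i\<in>Gen k. G (X i \<omega>)) = (\<Sum>i\<in>Gen k. ennreal (G (X i \<omega>)))"
          by (rule sum_ennreal[symmetric]) (use Gpos xs in simp)
        finally show "ennreal (aa k * (\<Sum>i\<in>Gen k. G (X i \<omega>))) = ennreal (aa k) * (\<Sum>i\<in>Gen k. ennreal (G (X i \<omega>)))" .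
      qed
      finally show "ennreal ((R0 X \<mu> fs p n \<omega>)\<^sup>2) \<le> (\<Sum>k<N. ennreal (aa k) * (\<Sum>i\<in>Gen k. ennreal (G (X i \<omega>))))" .
    qed
    also have "\<dots> = (\<Sum>k<N. ennreal (aa k) * (\<integral>\<^sup>+\<omega>. (\<Sum>i\<in>Gen k. ennreal (G (X i \<omega>))) \<partial>\<Omega>))"
    proof (subst nn_integral_sum)
      show "\<And>k. k \<in> {..<N} \<Longrightarrow> (\<lambda>\<omega>. ennreal (aa k) * (\<Sum>i\<in>Gen k. ennreal (G (X i \<omega>)))) \<in> borel_measurable \<Omega>"
        using Em by (intro borel_measurable_times_ennreal) auto
      show "(\<Sum>k<N. \<integral>\<^sup>+ \<omega>. ennreal (aa k) * (\<Sum>i\<in>Gen k. ennreal (G (X i \<omega>))) \<partial>\<Omega>) =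
          (\<Sum>k<N. ennreal (aa k) * \<integral>\<^sup>+ \<omega>. (\<Sum>i\<in>Gen k. ennreal (G (X i \<omega>))) \<partial>\<Omega>)"
        by (intro sum.cong refl nn_integral_cmult Em)
    qed
    also have "\<dots> \<le> (\<Sum>k<N. ennreal (aa k) * (2^k * ennreal C))"
      by (intro sum_mono mult_left_mono momG) simp
    also have "\<dots> = ennreal (\<Sum>k<N. aa k * 2^k * C)"
    proof -
      have "ennreal (aa k) * (2^k * ennreal C) = ennreal (aa k * 2^k * C)" for k
        using aa0[of k] C0 by (simp add: ennreal_mult ennreal_power[symmetric] mult.assoc)
      then have "(\<Sum>k<N. ennreal (aa k) * (2^k * ennreal C)) = (\<Sum>k<N. ennreal (aa k * 2^k * C))"
        by simp
      also have "\<dots> = ennreal (\<Sum>k<N. aa k * 2^k * C)"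
        by (rule sum_ennreal) (use aa0 C0 in simp)
      finally show ?thesis .
    qed
    also have "\<dots> \<le> ennreal (b n)"
    proof (rule ennreal_leI)
      have "(\<Sum>k<N. aa k * 2^k * C) = real N * C / 2^n * (\<Sum>k<N. (4::real)^k)"
        by (simp add: aa_def sum_distrib_left sum_divide_distrib power_mult_distrib[symmetric] mult_ac)
      also have "\<dots> \<le> real N * C / 2^n * 4^N"
        by (rule mult_left_mono[OF geom4]) (use C0 in simp)
      also have "\<dots> = b n" by (simp add: b_def N_def)
      finally show "(\<Sum>k<N. aa k * 2^k * C) \<le> b n" .
    qed
    finally show ?thesis .
  qed
  have "(\<lambda>n. ennreal (b n)) \<longlonglongrightarrow> ennreal 0"
    unfolding b_def by (rule tendsto_ennrealI[OF lim_part[OF p_less p_ratio C0]])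
  then have lb: "(\<lambda>n. ennreal (b n)) \<longlonglongrightarrow> 0" by simp
  show ?thesis
    by (rule tendsto_sandwich[OF _ _ tendsto_const lb]) (auto intro!: always_eventually bound)
qed

end
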